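(* There is an absolute constant $c>0$ such that the following holds. Let $\mathcal{C}$ be a class of functions $\{\pm1\}^d\to\{\pm1\}$, $\mathcal{V}\subseteq2^{[d]}$ a nonempty collection of subsets of features, $\varepsilon\in(0,1/2)$, $\delta\in(0,1)$, and let $n,m\in\mathbb{N}$ satisfy $$m\ \ge\ c\,\mathrm{VC}(\mathcal{C}\mid\mathcal{V})\frac{\log(1/\varepsilon)}{\varepsilon},\qquad nm\ \ge\ c\,\frac{\log|\mathcal{V}|+\log(1/\delta)}{\varepsilon}.$$ Then $\delta_{\mathrm{gen}}(\mathcal{C},\mathcal{V},n,m,\varepsilon)\le\delta$.
   Context: For $f:\{\pm1\}^d\to\{\pm1\}$, $\mathrm{Rel}(f)=\{j\in[d]:\exists v\in\{\pm1\}^d,\ f(v|_{v_j=+1})\neq f(v|_{v_j=-1})\}$, where $v|_{v_j=b}$ is $v$ with coordinate $j$ set to $b$. For $V\subseteq[d]$, $(\mathcal{C}\mid V)=\{f\in\mathcal{C}:\mathrm{Rel}(f)\subseteq V\}$, and $\mathrm{VC}(\mathcal{C}\mid\mathcal{V})=\max_{V\in\mathcal{V}}\mathrm{VC}(\mathcal{C}\mid V)$, where $\mathrm{VC}$ is the usual Vapnik–Chervonenkis dimension. For distributions $D^{(1)},\dots,D^{(n)}$ over $\{\pm1\}^d\times\{\pm1\}$, $\delta_{\mathrm{gen}}(\mathcal{C},\mathcal{V},n,m,\varepsilon,D^{(1)},\dots,D^{(n)})$ is the probability, over independent samples $S^{(i)}\sim(D^{(i)})^m$, $i\in[n]$, that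 there exist $h^{(1)},\dots,h^{(n)}\in\mathcal{C}$ with $\bigcup_i\mathrm{Rel}(h^{(i)})\in\mathcal{V}$ such that $\frac{1}{nm}\sum_{i}\sum_{(x,y)\in S^{(i)}}\mathbf{1}[h^{(i)}(x)\neq y]\le\varepsilon$ but $\frac1n\sum_i\Pr_{(x,y)\sim D^{(i)}}[h^{(i)}(x)\neq y]\ge4\varepsilon$. Then $\delta_{\mathrm{gen}}(\mathcal{C},\mathcal{V},n,m,\varepsilon)$ is the supremum of this quantity over all choices of $D^{(1)},\dots,D^{(n)}$. *)

theory Defs
  imports "HOL-Probability.Probability"
begin

text \<open>Points of the hypercube {+-1}^d are int lists of length d with entries in {-1,1};
  coordinates are indexed 0..d-1 (list indices). Labels are ints in {-1,1}.\<close>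

definition cube :: "nat \<Rightarrow> int list set" where
  "cube d = {v. length v = d \<and> set v \<subseteq> {-1, 1}}"

definition Rel :: "nat \<Rightarrow> (int list \<Rightarrow> int) \<Rightarrow> nat set" where
  "Rel d f = {j. j < d \<and> (\<exists>v\<in>cube d. f (v[j := 1]) \<noteq> f (v[j := -1]))}"

definition restrict_class :: "nat \<Rightarrow> (int list \<Rightarrow> int) set \<Rightarrow> nat set \<Rightarrow> (int list \<Rightarrow> int) set" where
  "restrict_class d C V = {f \<in> C. Rel d f \<subseteq> V}"

definition shatters :: "nat \<Rightarrow> (int list \<Rightarrow> int) set \<Rightarrow> int list set \<Rightarrow> bool" where
  "shatters d H S \<longleftrightarrow> S \<subseteq> cube d \<and>
     (\<forall>T\<subseteq>S. \<exists>h\<in>H. \<forall>x\<in>S. (h x = 1 \<longleftrightarrow> x \<in> T))"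

text \<open>VC dimension (on the domain cube d); 0 if nothing is shattered (e.g. empty class).\<close>
definition VC :: "nat \<Rightarrow> (int list \<Rightarrow> int) set \<Rightarrow> nat" where
  "VC d H = Sup {card S | S. shatters d H S}"

definition VC_coll :: "nat \<Rightarrow> (int list \<Rightarrow> int) set \<Rightarrow> nat set set \<Rightarrow> nat" where
  "VC_coll d C \<V> = Max ((\<lambda>V. VC d (restrict_class d C V)) ` \<V>)"

definition sample_pmf :: "nat \<Rightarrow> nat \<Rightarrow> (nat \<Rightarrow> (int list \<times> int) pmf) \<Rightarrow> (nat \<times> nat \<Rightarrow> int list \<times> int) pmf" where
  "sample_pmf n m D = Pi_pmf ({..<n} \<times> {..<m}) ([], 0) (\<lambda>(i, j). D i)"

definition emp_err :: "nat \<Rightarrow> nat \<Rightarrow> (nat \<Rightarrow> int list \<Rightarrow> int) \<Rightarrow> (nat \<times> nat \<Rightarrow> int list \<times> int) \<Rightarrow> real" where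
  "emp_err n m h s = (1 / (real n * real m)) *
     (\<Sum>i<n. \<Sum>j<m. if h i (fst (s (i, j))) \<noteq> snd (s (i, j)) then 1 else 0)"

definition pop_err :: "nat \<Rightarrow> (nat \<Rightarrow> (int list \<times> int) pmf) \<Rightarrow> (nat \<Rightarrow> int list \<Rightarrow> int) \<Rightarrow> real" where
  "pop_err n D h = (1 / real n) * (\<Sum>i<n. measure_pmf.prob (D i) {(x, y). h i x \<noteq> y})"

definition bad_event :: "nat \<Rightarrow> (int list \<Rightarrow> int) set \<Rightarrow> nat set set \<Rightarrow> nat \<Rightarrow> nat \<Rightarrow> real
    \<Rightarrow> (nat \<Rightarrow> (int list \<times> int) pmf) \<Rightarrow> (nat \<times> nat \<Rightarrow> int list \<times> int) set" where
  "bad_event d C \<V> n m \<epsilon> D = {s. \<exists>h :: nat \<Rightarrow> int list \<Rightarrow> int.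
      (\<forall>i<n. h i \<in> C) \<and> (\<Union>i<n. Rel d (h i)) \<in> \<V> \<and>
      emp_err n m h s \<le> \<epsilon> \<and> pop_err n D h \<ge> 4 * \<epsilon>}"

definition valid_dists :: "nat \<Rightarrow> nat \<Rightarrow> (nat \<Rightarrow> (int list \<times> int) pmf) set" where
  "valid_dists d n = {D. \<forall>i<n. set_pmf (D i) \<subseteq> cube d \<times> {-1, 1}}"

definition delta_gen_D :: "nat \<Rightarrow> (int list \<Rightarrow> int) set \<Rightarrow> nat set set \<Rightarrow> nat \<Rightarrow> nat \<Rightarrow> real
    \<Rightarrow> (nat \<Rightarrow> (int list \<times> int) pmf) \<Rightarrow> real" where
  "delta_gen_D d C \<V> n m \<epsilon> D = measure_pmf.prob (sample_pmf n m D) (bad_event d C \<V> n m \<epsilon> D)"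

definition delta_gen :: "nat \<Rightarrow> (int list \<Rightarrow> int) set \<Rightarrow> nat set set \<Rightarrow> nat \<Rightarrow> nat \<Rightarrow> real \<Rightarrow> real" where
  "delta_gen d C \<V> n m \<epsilon> = (SUP D \<in> valid_dists d n. delta_gen_D d C \<V> n m \<epsilon> D)"

end

theory Submission
  imports Defs "HOL-Analysis.Harmonic_Numbers"
begin

lemma prob_bind_pmf:
  "measure_pmf.prob (bind_pmf M N) X = measure_pmf.expectation M (\<lambda>x. measure_pmf.prob (N x) X)"
proof -
  have "ennreal (measure_pmf.prob (bind_pmf M N) X) = emeasure (measure_pmf (bind_pmf M N)) X"
    by (simp add: measure_pmf.emeasure_eq_measure)
  also have "\<dots> = (\<integral>\<^sup>+x. emeasure (N x) X \<partial>M)" by simp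
  also have "\<dots> = (\<integral>\<^sup>+x. ennreal (measure_pmf.prob (N x) X) \<partial>M)"
    by (simp add: measure_pmf.emeasure_eq_measure)
  also have "\<dots> = ennreal (measure_pmf.expectation M (\<lambda>x. measure_pmf.prob (N x) X))"
    by (intro nn_integral_eq_integral measure_pmf.integrable_const_bound[where B=1]) auto
  finally show ?thesis
    by (subst (asm) ennreal_inj) (auto intro: Bochner_Integration.integral_nonneg)
qed

lemma prob_pair_pmf:
  "measure_pmf.prob (pair_pmf A B) X = measure_pmf.expectation A (\<lambda>x. measure_pmf.prob B {y. (x,y) \<in> X})"
proof -
  have "pair_pmf A B = bind_pmf A (\<lambda>x. map_pmf (Pair x) B)"
    by (simp add: pair_pmf_def map_pmf_def)
  thus ?thesis by (simp only: prob_bind_pmf measure_map_pmf vimage_def)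
qed

lemma chernoff_lower:
  fixes Q :: "'k \<Rightarrow> 'b pmf" and g :: "'k \<Rightarrow> 'b \<Rightarrow> bool"
  assumes fin: "finite I"
  shows "measure_pmf.prob (Pi_pmf I dflt Q) {s. (\<Sum>k\<in>I. if g k (s k) then 1 else 0::real) \<le> a}
     \<le> 2 powr a * exp (-(\<Sum>k\<in>I. measure_pmf.prob (Q k) {b. g k b})/2)"
proof -
  define X where "X s = (\<Sum>k\<in>I. if g k (s k) then 1 else 0::real)" for s
  define u where "u s = (\<Prod>k\<in>I. if g k (s k) then 1/2 else 1::real)" for s
  have u_eq: "u s = 2 powr (- X s)" for s
    unfolding u_def X_def using fin
  proof (induction I rule: finite_induct)
    case empty then show ?case by simp
  next
    case (insert x F)
    have "(\<Prod>k\<in>insert x F. if g k (s k) then 1/2 else 1::real) =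
        (if g x (s x) then 1/2 else 1) * (\<Prod>k\<in>F. if g k (s k) then 1/2 else 1::real)"
      using insert by simp
    also have "\<dots> = 2 powr (-(if g x (s x) then 1 else 0)) * 2 powr (- (\<Sum>k\<in>F. if g k (s k) then 1 else 0::real))"
      using insert by (simp add: powr_minus_divide)
    also have "\<dots> = 2 powr (- (\<Sum>k\<in>insert x F. if g k (s k) then 1 else 0::real))"
      using insert by (simp add: powr_add[symmetric])
    finally show ?case .
  qed
  have int_u: "integrable (measure_pmf (Pi_pmf I dflt Q)) u"
    by (rule measure_pmf.integrable_const_bound[where B=1]) (auto simp: u_def abs_prod intro!: AE_I2 prod_le_1)
  have "{s. X s \<le> a} = {s \<in> space (measure_pmf (Pi_pmf I dflt Q)). u s \<ge> 2 powr (-a)}"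
    by (auto simp: u_eq)
  hence "measure_pmf.prob (Pi_pmf I dflt Q) {s. X s \<le> a} =
      measure_pmf.prob (Pi_pmf I dflt Q) {s \<in> space (measure_pmf (Pi_pmf I dflt Q)). u s \<ge> 2 powr (-a)}"
    by simp
  also have "\<dots> \<le> measure_pmf.expectation (Pi_pmf I dflt Q) u / 2 powr (-a)"
    by (intro integral_Markov_inequality_measure[where A=UNIV] int_u) (auto simp: u_def intro!: prod_nonneg)
  also have "measure_pmf.expectation (Pi_pmf I dflt Q) u =
      (\<Prod>k\<in>I. measure_pmf.expectation (Q k) (\<lambda>b. if g k b then 1/2 else 1::real))"
    unfolding u_def
    by (intro expectation_prod_Pi_pmf fin measure_pmf.integrable_const_bound[where B=1]) auto
  also have "\<dots> = (\<Prod>k\<in>I. 1 - measure_pmf.prob (Q k) {b. g k b} / 2)"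
  proof (intro prod.cong refl)
    fix k
    have "(\<lambda>b. if g k b then 1/2 else 1::real) = (\<lambda>b. 1 - (1/2) * indicator {b. g k b} b)"
      by (auto simp: indicator_def)
    thus "measure_pmf.expectation (Q k) (\<lambda>b. if g k b then 1/2 else 1::real) = 1 - measure_pmf.prob (Q k) {b. g k b} / 2"
      by (simp add: Bochner_Integration.integral_diff measure_pmf.integrable_const_bound[where B=1]
           measure_pmf.emeasure_eq_measure)
  qed
  also have "\<dots> \<le> (\<Prod>k\<in>I. exp (- measure_pmf.prob (Q k) {b. g k b} / 2))"
  proof (intro prod_mono conjI)
    fix k
    have "measure_pmf.prob (Q k) {b. g k b} \<le> 1" by (rule measure_pmf.prob_le_1)
    thus "0 \<le> 1 - measure_pmf.prob (Q k) {b. g k b} / 2" by linarith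
    show "1 - measure_pmf.prob (Q k) {b. g k b} / 2 \<le> exp (- measure_pmf.prob (Q k) {b. g k b} / 2)"
      using exp_ge_add_one_self[of "- measure_pmf.prob (Q k) {b. g k b} / 2"] by simp
  qed
  also have "\<dots> = exp (-(\<Sum>k\<in>I. measure_pmf.prob (Q k) {b. g k b})/2)"
    using fin by (simp add: exp_sum[symmetric] sum_divide_distrib sum_negf)
  finally show ?thesis
    by (simp add: X_def powr_minus_divide divide_simps mult.commute)
qed

definition shat :: "'a set set \<Rightarrow> 'a set \<Rightarrow> bool" where
  "shat F S \<longleftrightarrow> (\<lambda>A. A \<inter> S) ` F = Pow S"

lemma pajor:
  assumes "finite P" "F \<subseteq> Pow P"
  shows "card F \<le> card {S. S \<subseteq> P \<and> shat F S}"
  using assms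
proof (induction P arbitrary: F rule: finite_induct)
  case empty
  hence "F \<subseteq> {{}}" by auto
  then show ?case
  proof (cases "F = {}")
    case True then show ?thesis by simp
  next
    case False
    with \<open>F \<subseteq> {{}}\<close> have "F = {{}}" by auto
    hence "{S. S \<subseteq> {} \<and> shat F S} = {{}}" by (auto simp: shat_def)
    with \<open>F = {{}}\<close> show ?thesis by simp
  qed
next
  case (insert x P)
  define F0 where "F0 = {A \<in> F. x \<notin> A}"
  define F1 where "F1 = {A \<in> F. x \<in> A}"
  define F1' where "F1' = (\<lambda>A. A - {x}) ` F1"
  have finF: "finite F" using insert.prems insert.hyps(1) by (meson finite_Pow_iff finite_insert rev_finite_subset)
  have "card F = card F0 + card F1"
    unfolding F0_def F1_def using finF by (subst card_Un_disjoint[symmetric]) (auto intro: arg_cong[where f=card])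
  also have "card F1 = card F1'"
    unfolding F1'_def by (rule card_image[symmetric]) (auto simp: inj_on_def F1_def)
  also have "card F0 + card F1' = card (F0 \<union> F1') + card (F0 \<inter> F1')"
    using finF by (intro card_Un_Int) (auto simp: F0_def F1'_def F1_def)
  also have sub0: "F0 \<union> F1' \<subseteq> Pow P" using insert.prems insert.hyps
    by (auto simp: F0_def F1'_def F1_def)
  hence "card (F0 \<union> F1') \<le> card {S. S \<subseteq> P \<and> shat (F0 \<union> F1') S}"
    by (intro insert.IH) auto
  also have "card (F0 \<inter> F1') \<le> card {S. S \<subseteq> P \<and> shat (F0 \<inter> F1') S}"
    using sub0 by (intro insert.IH) auto
  also have "card {S. S \<subseteq> P \<and> shat (F0 \<union> F1') S} + card {S. S \<subseteq> P \<and> shat (F0 \<inter> F1') S}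
      = card ({S. S \<subseteq> P \<and> shat (F0 \<union> F1') S} \<union> insert x ` {S. S \<subseteq> P \<and> shat (F0 \<inter> F1') S})"
  proof -
    have "card (insert x ` {S. S \<subseteq> P \<and> shat (F0 \<inter> F1') S}) = card {S. S \<subseteq> P \<and> shat (F0 \<inter> F1') S}"
      using insert.hyps by (intro card_image) (auto simp: inj_on_def)
    moreover have "card ({S. S \<subseteq> P \<and> shat (F0 \<union> F1') S} \<union> insert x ` {S. S \<subseteq> P \<and> shat (F0 \<inter> F1') S})
        = card {S. S \<subseteq> P \<and> shat (F0 \<union> F1') S} + card (insert x ` {S. S \<subseteq> P \<and> shat (F0 \<inter> F1') S})"
      using insert.hyps by (intro card_Un_disjoint) auto
    ultimately show ?thesis by simp
  qed
  also have "\<dots> \<le> card {S. S \<subseteq> insert x P \<and> shat F S}"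
  proof (rule card_mono)
    show "finite {S. S \<subseteq> insert x P \<and> shat F S}" using insert.hyps by auto
    show "{S. S \<subseteq> P \<and> shat (F0 \<union> F1') S} \<union> insert x ` {S. S \<subseteq> P \<and> shat (F0 \<inter> F1') S}
        \<subseteq> {S. S \<subseteq> insert x P \<and> shat F S}"
    proof (intro Un_least subsetI)
      fix S assume "S \<in> {S. S \<subseteq> P \<and> shat (F0 \<union> F1') S}"
      hence S: "S \<subseteq> P" "shat (F0 \<union> F1') S" by auto
      have xS: "x \<notin> S" using S insert.hyps by auto
      have "(\<lambda>A. A \<inter> S) ` F = Pow S"
      proof
        show "(\<lambda>A. A \<inter> S) ` F \<subseteq> Pow S" by auto
        show "Pow S \<subseteq> (\<lambda>A. A \<inter> S) ` F"
        proof
          fix T assume "T \<in> Pow S"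
          with S(2) obtain B where B: "B \<in> F0 \<union> F1'" "T = B \<inter> S" unfolding shat_def by blast
          show "T \<in> (\<lambda>A. A \<inter> S) ` F"
          proof (cases "B \<in> F0")
            case True thus ?thesis using B by (auto simp: F0_def)
          next
            case False
            then obtain A where "A \<in> F" "B = A - {x}" using B by (auto simp: F1'_def F1_def)
            thus ?thesis using B xS by (intro image_eqI[of _ _ A]) auto
          qed
        qed
      qed
      thus "S \<in> {S. S \<subseteq> insert x P \<and> shat F S}" using S by (auto simp: shat_def)
    next
      fix S' assume "S' \<in> insert x ` {S. S \<subseteq> P \<and> shat (F0 \<inter> F1') S}"
      then obtain S where S: "S \<subseteq> P" "shat (F0 \<inter> F1') S" and S': "S' = insert x S" by auto
      have xS: "x \<notin> S" using S insert.hyps by auto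
      have "(\<lambda>A. A \<inter> S') ` F = Pow S'"
      proof
        show "(\<lambda>A. A \<inter> S') ` F \<subseteq> Pow S'" by auto
        show "Pow S' \<subseteq> (\<lambda>A. A \<inter> S') ` F"
        proof
          fix T assume T: "T \<in> Pow S'"
          hence "T - {x} \<in> Pow S" using S' by auto
          with S(2) obtain B where B: "B \<in> F0 \<inter> F1'" "T - {x} = B \<inter> S" unfolding shat_def by blast
          from B obtain A where A: "A \<in> F" "x \<in> A" "B = A - {x}" by (auto simp: F1'_def F1_def)
          have BF: "B \<in> F" "x \<notin> B" using B by (auto simp: F0_def)
          show "T \<in> (\<lambda>A. A \<inter> S') ` F"
          proof (cases "x \<in> T")
            case True
            have "A \<inter> S' = T" using A B True T S' xS by auto
            thus ?thesis using A by auto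
          next
            case False
            have "B \<inter> S' = T" using BF B False T S' xS by auto
            thus ?thesis using BF by auto
          qed
        qed
      qed
      thus "S' \<in> {S. S \<subseteq> insert x P \<and> shat F S}" using S S' by (auto simp: shat_def)
    qed
  qed
  finally show ?case by simp
qed

lemma card_small_subsets:
  assumes "finite P"
  shows "card {S. S \<subseteq> P \<and> card S \<le> k} = (\<Sum>j\<le>k. card P choose j)"
proof -
  have "{S. S \<subseteq> P \<and> card S \<le> k} = (\<Union>j\<le>k. {S. S \<subseteq> P \<and> card S = j})" by auto
  hence "card {S. S \<subseteq> P \<and> card S \<le> k} = (\<Sum>j\<le>k. card {S. S \<subseteq> P \<and> card S = j})"
    using assms by (simp only:) (intro card_UN_disjoint, auto intro: rev_finite_subset[of "Pow P"])
  also have "\<dots> = (\<Sum>j\<le>k. card P choose j)" using assms by (simp add: n_subsets)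
  finally show ?thesis .
qed

lemma sauer_bound:
  assumes "1 \<le> k" "k \<le> N"
  shows "(\<Sum>j\<le>k. real (N choose j)) \<le> (exp 1 * real N / real k) ^ k"
proof -
  define r where "r = real k / real N"
  have r: "0 < r" "r \<le> 1" using assms by (auto simp: r_def)
  have "(\<Sum>j\<le>k. real (N choose j)) \<le> (\<Sum>j\<le>k. real (N choose j) * r ^ j / r ^ k)"
  proof (intro sum_mono)
    fix j assume "j \<in> {..k}"
    hence "r ^ k \<le> r ^ j" using r by (intro power_decreasing) auto
    hence "1 \<le> r ^ j / r ^ k" using r by simp
    thus "real (N choose j) \<le> real (N choose j) * r ^ j / r ^ k"
      using mult_left_mono[of 1 "r ^ j / r ^ k" "real (N choose j)"] by simp
  qed
  also have "\<dots> \<le> (\<Sum>j\<le>N. real (N choose j) * r ^ j / r ^ k)"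
    using assms r by (intro sum_mono2) auto
  also have "\<dots> = (1 + r) ^ N / r ^ k"
  proof -
    have "(r + 1) ^ N = (\<Sum>j\<le>N. of_nat (N choose j) * r ^ j * 1 ^ (N - j))" by (rule binomial_ring)
    thus ?thesis by (simp add: sum_divide_distrib add.commute)
  qed
  also have "(1 + r) ^ N \<le> exp (real k)"
    using exp_ge_one_plus_x_over_n_power_n[where x="real k" and n=N] assms by (simp add: r_def)
  also have "exp (real k) / r ^ k = (exp 1 * real N / real k) ^ k"
    using assms by (simp add: r_def power_divide exp_of_nat_mult[symmetric] power_mult_distrib)
  finally show ?thesis using r by (simp add: divide_right_mono)
qed

lemma Pi_pmf_pair:
  assumes fin: "finite A"
  shows "Pi_pmf A (d1, d2) (\<lambda>x. pair_pmf (p x) (q x)) =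
     map_pmf (\<lambda>(f, g) x. if x \<in> A then (f x, g x) else (d1, d2)) (pair_pmf (Pi_pmf A d1 p) (Pi_pmf A d2 q))"
proof -
  have "Pi_pmf A (d1, d2) (\<lambda>x. pair_pmf (p x) (q x)) =
      Pi_pmf A (d1, d2) (\<lambda>x. bind_pmf (p x) (\<lambda>a. bind_pmf (q x) (\<lambda>b. return_pmf (a, b))))"
    by (simp add: pair_pmf_def)
  also have "\<dots> = bind_pmf (Pi_pmf A d1 p) (\<lambda>f. Pi_pmf A (d1, d2) (\<lambda>x. bind_pmf (q x) (\<lambda>b. return_pmf (f x, b))))"
    by (rule Pi_pmf_bind[OF fin])
  also have "\<dots> = bind_pmf (Pi_pmf A d1 p) (\<lambda>f. bind_pmf (Pi_pmf A d2 q) (\<lambda>g. Pi_pmf A (d1, d2) (\<lambda>x. return_pmf (f x, g x))))"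
    by (intro bind_pmf_cong refl Pi_pmf_bind[OF fin])
  also have "\<dots> = bind_pmf (Pi_pmf A d1 p) (\<lambda>f. bind_pmf (Pi_pmf A d2 q) (\<lambda>g. return_pmf (\<lambda>x. if x \<in> A then (f x, g x) else (d1, d2))))"
    using fin by simp
  also have "\<dots> = map_pmf (\<lambda>(f, g) x. if x \<in> A then (f x, g x) else (d1, d2)) (pair_pmf (Pi_pmf A d1 p) (Pi_pmf A d2 q))"
    by (simp add: pair_pmf_def map_bind_pmf map_return_pmf)
  finally show ?thesis .
qed

definition swp :: "('k \<Rightarrow> bool) \<Rightarrow> ('k \<Rightarrow> 'b \<times> 'b) \<Rightarrow> ('k \<Rightarrow> 'b \<times> 'b)" where
  "swp \<sigma> W = (\<lambda>k. if \<sigma> k then prod.swap (W k) else W k)"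

lemma swp_swp [simp]: "swp \<sigma> (swp \<sigma> W) = W"
  by (auto simp: swp_def fun_eq_iff)

lemma inj_swp: "inj (swp \<sigma>)"
  by (metis injI swp_swp)

lemma Pi_pmf_swp:
  assumes fin: "finite A" and sym: "\<And>x a b. pmf (R x) (a, b) = pmf (R x) (b, a)"
  shows "map_pmf (swp \<sigma>) (Pi_pmf A (d, d) R) = Pi_pmf A (d, d) R"
proof (rule pmf_eqI)
  fix W
  have "pmf (map_pmf (swp \<sigma>) (Pi_pmf A (d, d) R)) W = pmf (map_pmf (swp \<sigma>) (Pi_pmf A (d, d) R)) (swp \<sigma> (swp \<sigma> W))"
    by simp
  also have "\<dots> = pmf (Pi_pmf A (d, d) R) (swp \<sigma> W)"
    by (rule pmf_map_inj'[OF inj_swp])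
  also have "\<dots> = pmf (Pi_pmf A (d, d) R) W"
  proof -
    have o1: "swp \<sigma> W x = (d, d) \<longleftrightarrow> W x = (d, d)" for x
      by (cases "W x") (auto simp add: swp_def)
    have o: "(\<forall>x. x \<notin> A \<longrightarrow> swp \<sigma> W x = (d, d)) \<longleftrightarrow> (\<forall>x. x \<notin> A \<longrightarrow> W x = (d, d))"
      by (simp only: o1)
    have p: "pmf (R x) (swp \<sigma> W x) = pmf (R x) (W x)" for x
      using sym[of x "fst (W x)" "snd (W x)"] by (cases "W x") (simp add: swp_def)
    show ?thesis using fin unfolding pmf_Pi[OF fin] o p by simp
  qed
  finally show "pmf (map_pmf (swp \<sigma>) (Pi_pmf A (d, d) R)) W = pmf (Pi_pmf A (d, d) R) W" .
qed

lemma average_bound: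
  fixes M :: "'a pmf" and \<Sigma> :: "'s pmf"
  assumes inv: "\<And>\<sigma>. map_pmf (\<phi> \<sigma>) M = M"
  assumes bnd: "\<And>W. W \<in> set_pmf M \<Longrightarrow> measure_pmf.prob \<Sigma> {\<sigma>. \<phi> \<sigma> W \<in> B} \<le> \<beta>"
  shows "measure_pmf.prob M B \<le> \<beta>"
proof -
  have "measure_pmf.prob M B = measure_pmf.expectation \<Sigma> (\<lambda>\<sigma>. measure_pmf.prob M {W. (\<sigma>, W) \<in> {(\<sigma>, W). \<phi> \<sigma> W \<in> B}})"
  proof -
    have "measure_pmf.prob M {W. (\<sigma>, W) \<in> {(\<sigma>, W). \<phi> \<sigma> W \<in> B}} = measure_pmf.prob M B" for \<sigma>
    proof -
      have "measure_pmf.prob M {W. (\<sigma>, W) \<in> {(\<sigma>, W). \<phi> \<sigma> W \<in> B}} = measure_pmf.prob (map_pmf (\<phi> \<sigma>) M) B"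
        by (simp add: vimage_def)
      thus ?thesis by (simp add: inv)
    qed
    thus ?thesis by simp
  qed
  also have "\<dots> = measure_pmf.prob (pair_pmf \<Sigma> M) {(\<sigma>, W). \<phi> \<sigma> W \<in> B}"
    by (rule prob_pair_pmf[symmetric])
  also have "\<dots> = measure_pmf.prob (map_pmf (\<lambda>(x, y). (y, x)) (pair_pmf M \<Sigma>)) {(\<sigma>, W). \<phi> \<sigma> W \<in> B}"
    by (subst pair_commute_pmf[of \<Sigma> M]) (rule refl)
  also have "\<dots> = measure_pmf.prob (pair_pmf M \<Sigma>) {(W, \<sigma>). \<phi> \<sigma> W \<in> B}"
    by (simp add: vimage_def case_prod_unfold)
  also have "\<dots> = measure_pmf.expectation M (\<lambda>W. measure_pmf.prob \<Sigma> {\<sigma>. \<phi> \<sigma> W \<in> B})"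
    by (simp add: prob_pair_pmf)
  also have "\<dots> \<le> measure_pmf.expectation M (\<lambda>W. \<beta>)"
    by (intro integral_mono_AE measure_pmf.integrable_const measure_pmf.integrable_const_bound[where B=1] AE_pmfI bnd) auto
  also have "\<dots> = \<beta>" by simp
  finally show ?thesis .
qed

lemma finite_cube: "finite (cube d)"
proof -
  have "cube d = {xs. set xs \<subseteq> {-1, 1} \<and> length xs = d}" by (auto simp: cube_def)
  thus ?thesis using finite_lists_length_eq[of "{-1, 1::int}" d] by simp
qed

lemma VC_upper:
  assumes "shatters d H S"
  shows "card S \<le> VC d H"
proof -
  have "bdd_above {card S | S. shatters d H S}"
    by (rule bdd_aboveI[of _ "card (cube d)"])
       (auto simp: shatters_def intro: card_mono[OF finite_cube])
  thus ?thesis unfolding VC_def using assms by (intro cSup_upper) auto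
qed

definition HV :: "nat \<Rightarrow> (int list \<Rightarrow> int) set \<Rightarrow> nat set \<Rightarrow> nat \<Rightarrow> (nat \<Rightarrow> int list \<Rightarrow> int) set" where
  "HV d C V n = {h. \<forall>i<n. h i \<in> restrict_class d C V}"

definition pat :: "nat \<Rightarrow> nat \<Rightarrow> (nat \<times> nat \<Rightarrow> (int list \<times> int) \<times> (int list \<times> int)) \<Rightarrow> (nat \<Rightarrow> int list \<Rightarrow> int)
   \<Rightarrow> nat \<times> nat \<Rightarrow> bool \<times> bool" where
  "pat n m W h = (\<lambda>k. if k \<in> {..<n} \<times> {..<m} then
      (h (fst k) (fst (fst (W k))) \<noteq> snd (fst (W k)), h (fst k) (fst (snd (W k))) \<noteq> snd (snd (W k)))
      else (False, False))"

lemma pattern_count: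
  assumes C: "\<forall>f\<in>C. \<forall>x\<in>cube d. f x \<in> {-1, 1}"
  assumes W: "\<And>k. k \<in> {..<n} \<times> {..<m} \<Longrightarrow> W k \<in> (cube d \<times> {-1, 1}) \<times> (cube d \<times> {-1, 1})"
  shows "finite (pat n m W ` HV d C V n) \<and>
         real (card (pat n m W ` HV d C V n)) \<le> (\<Sum>j\<le>VC d (restrict_class d C V). real (2 * m choose j)) ^ n"
proof -
  define k where "k = VC d (restrict_class d C V)"
  define P where "P i = (\<lambda>j. fst (fst (W (i, j)))) ` {..<m} \<union> (\<lambda>j. fst (snd (W (i, j)))) ` {..<m}" for i
  define Tr where "Tr i = (\<lambda>f. {x \<in> P i. f x = 1}) ` restrict_class d C V" for i
  have finP: "finite (P i)" for i by (simp add: P_def)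
  have cardP: "card (P i) \<le> 2 * m" for i
  proof -
    have "card (P i) \<le> card ((\<lambda>j. fst (fst (W (i, j)))) ` {..<m}) + card ((\<lambda>j. fst (snd (W (i, j)))) ` {..<m})"
      unfolding P_def by (rule card_Un_le)
    also have "\<dots> \<le> m + m" by (intro add_mono) (auto intro: order.trans[OF card_image_le])
    finally show ?thesis by simp
  qed
  have Pcube: "P i \<subseteq> cube d" if "i < n" for i
    using W that by (force simp: P_def)
  have TrPow: "Tr i \<subseteq> Pow (P i)" for i by (auto simp: Tr_def)
  have finTr: "finite (Tr i)" for i
    using TrPow finP by (meson finite_Pow_iff rev_finite_subset)
  have cardTr: "real (card (Tr i)) \<le> (\<Sum>j\<le>k. real (2 * m choose j))" if "i < n" for i
  proof -
    have "card (Tr i) \<le> card {S. S \<subseteq> P i \<and> shat (Tr i) S}"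
      by (rule pajor[OF finP TrPow])
    also have "\<dots> \<le> card {S. S \<subseteq> P i \<and> card S \<le> k}"
    proof (rule card_mono)
      show "finite {S. S \<subseteq> P i \<and> card S \<le> k}" using finP by auto
      show "{S. S \<subseteq> P i \<and> shat (Tr i) S} \<subseteq> {S. S \<subseteq> P i \<and> card S \<le> k}"
      proof safe
        fix S assume S: "S \<subseteq> P i" "shat (Tr i) S"
        have "shatters d (restrict_class d C V) S"
          unfolding shatters_def
        proof (intro conjI allI impI)
          show "S \<subseteq> cube d" using S Pcube that by auto
          fix T assume "T \<subseteq> S"
          hence "T \<in> (\<lambda>A. A \<inter> S) ` Tr i" using S(2) by (auto simp: shat_def)
          then obtain f where f: "f \<in> restrict_class d C V" "T = {x \<in> P i. f x = 1} \<inter> S"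
            by (auto simp: Tr_def)
          show "\<exists>h\<in>restrict_class d C V. \<forall>x\<in>S. (h x = 1) = (x \<in> T)"
            using f S(1) by (intro bexI[of _ f]) auto
        qed
        thus "card S \<le> k" unfolding k_def by (rule VC_upper)
      qed
    qed
    also have "\<dots> = (\<Sum>j\<le>k. card (P i) choose j)" by (rule card_small_subsets[OF finP])
    finally have "real (card (Tr i)) \<le> (\<Sum>j\<le>k. real (card (P i) choose j))"
      by (simp flip: of_nat_sum)
    also have "\<dots> \<le> (\<Sum>j\<le>k. real (2 * m choose j))"
      by (intro sum_mono) (simp add: binomial_right_mono cardP)
    finally show ?thesis .
  qed
  define \<Phi> where "\<Phi> T = (\<lambda>kk. if kk \<in> {..<n} \<times> {..<m} then
      ((fst (fst (W kk)) \<in> T (fst kk)) \<noteq> (snd (fst (W kk)) = 1),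
       (fst (snd (W kk)) \<in> T (fst kk)) \<noteq> (snd (snd (W kk)) = 1))
      else (False, False))" for T
  have sub: "pat n m W ` HV d C V n \<subseteq> \<Phi> ` (PiE {..<n} Tr)"
  proof
    fix e assume "e \<in> pat n m W ` HV d C V n"
    then obtain h where h: "h \<in> HV d C V n" "e = pat n m W h" by auto
    define T where "T = restrict (\<lambda>i. {x \<in> P i. h i x = 1}) {..<n}"
    have "T \<in> PiE {..<n} Tr" using h(1) by (auto simp: T_def Tr_def HV_def)
    moreover have "e = \<Phi> T"
    proof
      fix kk
      show "e kk = \<Phi> T kk"
      proof (cases "kk \<in> {..<n} \<times> {..<m}")
        case False thus ?thesis by (simp add: h pat_def \<Phi>_def)
      next
        case True
        obtain i j where kk: "kk = (i, j)" "i < n" "j < m" using True by auto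
        obtain x1 y1 x2 y2 where Wk: "W kk = ((x1, y1), (x2, y2))" by (metis prod.exhaust)
        have mem: "x1 \<in> cube d" "x2 \<in> cube d" "y1 \<in> {-1, 1}" "y2 \<in> {-1, 1}" using W[OF True] Wk by auto
        have hC: "h i \<in> C" using h(1) kk by (auto simp: HV_def restrict_class_def)
        have v: "h i x1 \<in> {-1, 1}" "h i x2 \<in> {-1, 1}" using C hC mem by auto
        have inP: "x1 \<in> P i" "x2 \<in> P i" using Wk kk unfolding P_def
          by (auto intro!: image_eqI[of _ _ j])
        show ?thesis using v mem inP kk Wk
          by (auto simp: h pat_def \<Phi>_def T_def)
      qed
    qed
    ultimately show "e \<in> \<Phi> ` (PiE {..<n} Tr)" by auto
  qed
  have finPi: "finite (PiE {..<n} Tr)" by (intro finite_PiE finTr) auto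
  have "real (card (pat n m W ` HV d C V n)) \<le> real (card (\<Phi> ` (PiE {..<n} Tr)))"
    using sub finPi by (intro of_nat_mono card_mono) auto
  also have "\<dots> \<le> real (card (PiE {..<n} Tr))" by (intro of_nat_mono card_image_le finPi)
  also have "\<dots> = (\<Prod>i<n. real (card (Tr i)))" by (simp add: card_PiE)
  also have "\<dots> \<le> (\<Prod>i<n. (\<Sum>j\<le>k. real (2 * m choose j)))"
    by (intro prod_mono) (auto simp: cardTr)
  also have "\<dots> = (\<Sum>j\<le>k. real (2 * m choose j)) ^ n" by simp
  finally show ?thesis using finite_subset[OF sub finite_imageI[OF finPi]] unfolding k_def by simp
qed

definition cnt :: "nat \<Rightarrow> nat \<Rightarrow> (nat \<Rightarrow> int list \<Rightarrow> int) \<Rightarrow> (nat \<times> nat \<Rightarrow> int list \<times> int) \<Rightarrow> real" where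
  "cnt n m h s = (\<Sum>k\<in>{..<n} \<times> {..<m}. if h (fst k) (fst (s k)) \<noteq> snd (s k) then 1 else 0)"

lemma emp_err_cnt: "emp_err n m h s = cnt n m h s / (real n * real m)"
  unfolding emp_err_def cnt_def by (simp add: sum.cartesian_product case_prod_unfold)

lemma sample_pmf_alt: "sample_pmf n m D = Pi_pmf ({..<n} \<times> {..<m}) ([], 0) (\<lambda>k. D (fst k))"
  unfolding sample_pmf_def by (simp add: case_prod_unfold)

lemma mu_eq:
  assumes "n > 0"
  shows "(\<Sum>k\<in>{..<n} \<times> {..<m}. measure_pmf.prob (D (fst k)) {b. h (fst k) (fst b) \<noteq> snd b})
     = real m * real n * pop_err n D h"
proof -
  have "(\<Sum>k\<in>{..<n} \<times> {..<m}. measure_pmf.prob (D (fst k)) {b. h (fst k) (fst b) \<noteq> snd b})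
     = (\<Sum>i<n. \<Sum>j<m. measure_pmf.prob (D i) {b. h i (fst b) \<noteq> snd b})"
    by (simp only: sum.cartesian_product) (simp add: case_prod_unfold)
  also have "\<dots> = real m * (\<Sum>i<n. measure_pmf.prob (D i) {(x, y). h i x \<noteq> y})"
    by (simp add: sum_distrib_left case_prod_unfold)
  finally show ?thesis using assms by (simp add: pop_err_def)
qed

lemma two_powr_le: "(0::real) \<le> t \<Longrightarrow> 2 powr t \<le> exp (25/36 * t)"
proof -
  assume t: "0 \<le> t"
  have "t * ln 2 \<le> t * (25/36)" using ln2_le_25_over_36 t by (intro mult_left_mono) auto
  thus ?thesis by (simp add: powr_def mult.commute)
qed

lemma ghost_half:
  assumes n: "n > 0" and t2: "2 \<le> t" and pop: "real m * real n * pop_err n D h \<ge> 4 * t"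
  shows "measure_pmf.prob (sample_pmf n m D) {s. 2 * t \<le> cnt n m h s} \<ge> 1/2"
proof -
  let ?S = "sample_pmf n m D"
  have "measure_pmf.prob ?S {s. cnt n m h s \<le> 2 * t}
       \<le> 2 powr (2 * t) * exp (-(\<Sum>k\<in>{..<n} \<times> {..<m}. measure_pmf.prob (D (fst k)) {b. h (fst k) (fst b) \<noteq> snd b})/2)"
    unfolding sample_pmf_alt cnt_def
    using chernoff_lower[where I="{..<n} \<times> {..<m}" and dflt="([], 0)" and Q="\<lambda>k. D (fst k)"
        and g="\<lambda>k b. h (fst k) (fst b) \<noteq> snd b" and a="2 * t"] by simp
  also have "\<dots> \<le> exp (25/36 * (2 * t)) * exp (- (2 * t))"
    using mu_eq[OF n, of D h m] pop t2 by (intro mult_mono two_powr_le) auto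
  also have "\<dots> = exp (- (22/36 * t))" by (simp add: exp_add[symmetric])
  also have "\<dots> \<le> exp (- 1)" using t2 by simp
  also have "\<dots> \<le> 1/2"
  proof -
    have "2 \<le> exp (1::real)" using exp_ge_add_one_self[of 1] by simp
    thus ?thesis by (simp add: exp_minus field_simps)
  qed
  finally have le: "measure_pmf.prob ?S {s. cnt n m h s \<le> 2 * t} \<le> 1/2" .
  have eq: "measure_pmf.prob ?S {s. 2 * t \<le> cnt n m h s} = 1 - measure_pmf.prob ?S {s. cnt n m h s < 2 * t}"
    using measure_pmf.prob_compl[of "{s. cnt n m h s < 2 * t}" ?S] by (simp add: Compl_eq_Diff_UNIV[symmetric] not_less Collect_neg_eq[symmetric])
  have "measure_pmf.prob ?S {s. cnt n m h s < 2 * t} \<le> measure_pmf.prob ?S {s. cnt n m h s \<le> 2 * t}"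
    by (intro measure_pmf.finite_measure_mono) auto
  thus ?thesis using le eq by linarith
qed

definition PW :: "nat \<Rightarrow> nat \<Rightarrow> (nat \<Rightarrow> (int list \<times> int) pmf) \<Rightarrow> (nat \<times> nat \<Rightarrow> (int list \<times> int) \<times> (int list \<times> int)) pmf" where
  "PW n m D = Pi_pmf ({..<n} \<times> {..<m}) (([], 0), ([], 0)) (\<lambda>k. pair_pmf (D (fst k)) (D (fst k)))"

lemma ghost:
  assumes n: "n > 0" and m: "m > 0" and t: "t = \<epsilon> * real n * real m" and t2: "2 \<le> t"
  shows "measure_pmf.prob (sample_pmf n m D) {s. \<exists>h\<in>H. cnt n m h s \<le> t \<and> pop_err n D h \<ge> 4 * \<epsilon>}
     \<le> 2 * measure_pmf.prob (PW n m D) {W. \<exists>h\<in>H. cnt n m h (fst \<circ> W) \<le> t \<and> 2 * t \<le> cnt n m h (snd \<circ> W)}"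
proof -
  define I where "I = {..<n} \<times> {..<m}"
  let ?S = "sample_pmf n m D"
  define comb where "comb = (\<lambda>(f, g) x. if x \<in> I then (f x, g x) else ((([]::int list), (0::int)), (([]::int list), (0::int))))"
  define B2 where "B2 = {W. \<exists>h\<in>H. cnt n m h (fst \<circ> W) \<le> t \<and> 2 * t \<le> cnt n m h (snd \<circ> W)}"
  define bad where "bad = {s. \<exists>h\<in>H. cnt n m h s \<le> t \<and> pop_err n D h \<ge> 4 * \<epsilon>}"
  have PWeq: "PW n m D = map_pmf comb (pair_pmf ?S ?S)"
    unfolding PW_def sample_pmf_alt comb_def I_def by (rule Pi_pmf_pair) simp
  have cnt_fst: "cnt n m h (fst \<circ> comb (Z, Z')) = cnt n m h Z" for h Z Z'
    unfolding cnt_def comb_def I_def by (intro sum.cong) auto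
  have cnt_snd: "cnt n m h (snd \<circ> comb (Z, Z')) = cnt n m h Z'" for h Z Z'
    unfolding cnt_def comb_def I_def by (intro sum.cong) auto
  have "measure_pmf.prob (PW n m D) B2 = measure_pmf.prob (pair_pmf ?S ?S) (comb -` B2)"
    by (simp add: PWeq)
  also have "\<dots> = measure_pmf.expectation ?S (\<lambda>Z. measure_pmf.prob ?S {Z'. (Z, Z') \<in> comb -` B2})"
    by (rule prob_pair_pmf)
  also have "\<dots> \<ge> measure_pmf.expectation ?S (\<lambda>Z. 1/2 * indicator bad Z)"
  proof (intro integral_mono measure_pmf.integrable_const_bound[where B=1])
    fix Z
    show "1/2 * indicator bad Z \<le> measure_pmf.prob ?S {Z'. (Z, Z') \<in> comb -` B2}"
    proof (cases "Z \<in> bad")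
      case True
      then obtain h where h: "h \<in> H" "cnt n m h Z \<le> t" "pop_err n D h \<ge> 4 * \<epsilon>" by (auto simp: bad_def)
      have "4 * t \<le> real m * real n * pop_err n D h"
        using h(3) t n m by (simp add: mult_left_mono mult.commute mult.left_commute)
      hence "1/2 \<le> measure_pmf.prob ?S {s. 2 * t \<le> cnt n m h s}"
        by (intro ghost_half n t2)
      also have "\<dots> \<le> measure_pmf.prob ?S {Z'. (Z, Z') \<in> comb -` B2}"
        using h by (intro measure_pmf.finite_measure_mono) (auto simp: B2_def cnt_fst cnt_snd)
      finally show ?thesis using True by simp
    qed simp
  qed (auto simp: measure_pmf.prob_le_1 indicator_def)
  finally have "measure_pmf.expectation ?S (\<lambda>Z. 1/2 * indicator bad Z) \<le> measure_pmf.prob (PW n m D) B2" .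
  moreover have "measure_pmf.expectation ?S (\<lambda>Z. 1/2 * indicator bad Z) = 1/2 * measure_pmf.prob ?S bad"
    by (simp add: measure_pmf.emeasure_eq_measure)
  ultimately show ?thesis unfolding bad_def B2_def by simp
qed

lemma bern_prob:
  "measure_pmf.prob (bernoulli_pmf (1/2)) {b. if b then P else Q} = ((if P then 1 else 0) + (if Q then 1 else 0)) / (2::real)"
proof (cases P; cases Q)
  assume "P" "Q" thus ?thesis by simp
next
  assume "P" "\<not> Q"
  hence "{b. if b then P else Q} = {True}" by auto
  thus ?thesis using \<open>P\<close> \<open>\<not>Q\<close> by (simp add: measure_pmf_single)
next
  assume "\<not> P" "Q"
  hence "{b. if b then P else Q} = {False}" by auto
  thus ?thesis using \<open>\<not>P\<close> \<open>Q\<close> by (simp add: measure_pmf_single)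
next
  assume "\<not> P" "\<not> Q" thus ?thesis by simp
qed

lemma swap_event:
  fixes e :: "'k \<Rightarrow> bool \<times> bool"
  assumes fin: "finite I" and t: "0 \<le> t"
  shows "measure_pmf.prob (Pi_pmf I False (\<lambda>_. bernoulli_pmf (1/2)))
     {\<sigma>. (\<Sum>k\<in>I. if (if \<sigma> k then snd (e k) else fst (e k)) then 1 else 0::real) \<le> t \<and>
          2 * t \<le> (\<Sum>k\<in>I. if (if \<sigma> k then fst (e k) else snd (e k)) then 1 else 0::real)}
     \<le> exp (- t / 18)"
proof -
  let ?\<Sigma> = "Pi_pmf I False (\<lambda>_. bernoulli_pmf (1/2))"
  define F where "F \<sigma> = (\<Sum>k\<in>I. if (if \<sigma> k then snd (e k) else fst (e k)) then 1 else 0::real)" for \<sigma>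
  define G where "G \<sigma> = (\<Sum>k\<in>I. if (if \<sigma> k then fst (e k) else snd (e k)) then 1 else 0::real)" for \<sigma>
  define T where "T = (\<Sum>k\<in>I. (if fst (e k) then 1 else 0) + (if snd (e k) then 1 else 0::real))"
  have FG: "F \<sigma> + G \<sigma> = T" for \<sigma>
    unfolding F_def G_def T_def sum.distrib[symmetric] by (intro sum.cong) auto
  define a where "a = (if 3 * t \<le> T then t else T - 2 * t)"
  show ?thesis
  proof (cases "T < 2 * t")
    case True
    have F0: "0 \<le> F x" for x unfolding F_def by (intro sum_nonneg) auto
    have "\<not> (F x \<le> t \<and> 2 * t \<le> G x)" for x using FG[of x] F0[of x] True by linarith
    hence E: "{\<sigma>. F \<sigma> \<le> t \<and> 2 * t \<le> G \<sigma>} = {}" by blast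
    show ?thesis unfolding F_def[symmetric] G_def[symmetric] E by simp
  next
    case False
    have a0: "0 \<le> a" using False t by (auto simp: a_def)
    have "measure_pmf.prob ?\<Sigma> {\<sigma>. F \<sigma> \<le> t \<and> 2 * t \<le> G \<sigma>} \<le> measure_pmf.prob ?\<Sigma> {\<sigma>. F \<sigma> \<le> a}"
    proof (intro measure_pmf.finite_measure_mono subsetI)
      fix x assume "x \<in> {\<sigma>. F \<sigma> \<le> t \<and> 2 * t \<le> G \<sigma>}"
      thus "x \<in> {\<sigma>. F \<sigma> \<le> a}" using FG[of x] by (auto simp: a_def)
    qed auto
    also have "\<dots> \<le> 2 powr a * exp (- (\<Sum>k\<in>I. measure_pmf.prob (bernoulli_pmf (1/2)) {b. if b then snd (e k) else fst (e k)}) / 2)"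
      unfolding F_def
      using chernoff_lower[where I=I and dflt=False and Q="\<lambda>_. bernoulli_pmf (1/2)"
        and g="\<lambda>k b. if b then snd (e k) else fst (e k)" and a=a] fin by simp
    also have "(\<Sum>k\<in>I. measure_pmf.prob (bernoulli_pmf (1/2)) {b. if b then snd (e k) else fst (e k)}) = T / 2"
      unfolding T_def bern_prob by (simp add: sum_divide_distrib add.commute)
    also have "2 powr a * exp (- (T / 2) / 2) \<le> exp (25/36 * a) * exp (- T / 4)"
      using a0 by (intro mult_mono two_powr_le) auto
    also have "\<dots> = exp (25/36 * a - T / 4)" by (simp add: exp_add[symmetric])
    also have "\<dots> \<le> exp (- t / 18)"
    proof -
      have "25/36 * a - T / 4 \<le> - t / 18"
      proof (cases "3 * t \<le> T")
        case True thus ?thesis by (simp add: a_def)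
      next
        case False
        hence "a = T - 2 * t" by (simp add: a_def)
        thus ?thesis using False by linarith
      qed
      thus ?thesis by simp
    qed
    finally show ?thesis unfolding F_def G_def .
  qed
qed

lemma set_PW:
  assumes valid: "\<forall>i<n. set_pmf (D i) \<subseteq> cube d \<times> {-1, 1}"
  assumes W: "W \<in> set_pmf (PW n m D)" and k: "k \<in> {..<n} \<times> {..<m}"
  shows "W k \<in> (cube d \<times> {-1, 1}) \<times> (cube d \<times> {-1, 1})"
proof -
  have "W \<in> PiE_dflt ({..<n} \<times> {..<m}) (([], 0), ([], 0)) (set_pmf \<circ> (\<lambda>k. pair_pmf (D (fst k)) (D (fst k))))"
    using W unfolding PW_def by (simp add: set_Pi_pmf)
  moreover obtain i j where ij: "k = (i, j)" "i < n" "j < m" using k by auto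
  ultimately have Wk: "W k \<in> set_pmf (D (fst k)) \<times> set_pmf (D (fst k))" by (simp add: PiE_dflt_def)
  have "fst k < n" using k by auto
  hence sub: "set_pmf (D (fst k)) \<subseteq> cube d \<times> {-1, 1}" using valid by simp
  obtain a b where ab: "W k = (a, b)" by (cases "W k")
  have "a \<in> set_pmf (D (fst k))" "b \<in> set_pmf (D (fst k))" using Wk ab by simp_all
  hence "a \<in> cube d \<times> {-1, 1}" "b \<in> cube d \<times> {-1, 1}" using sub by (auto intro: subsetD)
  thus ?thesis using ab by simp
qed

lemma swap_bound:
  assumes C: "\<forall>f\<in>C. \<forall>x\<in>cube d. f x \<in> {-1, 1}"
  assumes valid: "\<forall>i<n. set_pmf (D i) \<subseteq> cube d \<times> {-1, 1}"
  assumes t: "0 \<le> t"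
  shows "measure_pmf.prob (PW n m D) {W. \<exists>h\<in>HV d C V n. cnt n m h (fst \<circ> W) \<le> t \<and> 2 * t \<le> cnt n m h (snd \<circ> W)}
     \<le> (\<Sum>j\<le>VC d (restrict_class d C V). real (2 * m choose j)) ^ n * exp (- t / 18)"
proof (rule average_bound[where \<phi>=swp and \<Sigma>="Pi_pmf ({..<n} \<times> {..<m}) False (\<lambda>_. bernoulli_pmf (1/2))"])
  fix \<sigma> :: "nat \<times> nat \<Rightarrow> bool"
  show "map_pmf (swp \<sigma>) (PW n m D) = PW n m D"
    unfolding PW_def by (rule Pi_pmf_swp) (simp_all add: pmf_pair mult.commute)
next
  fix W assume W: "W \<in> set_pmf (PW n m D)"
  define I where "I = {..<n} \<times> {..<m}"
  let ?\<Sigma> = "Pi_pmf I False (\<lambda>_. bernoulli_pmf (1/2))"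
  define F where "F e \<sigma> = (\<Sum>k\<in>I. if (if \<sigma> k then snd (e k) else fst (e k)) then 1 else 0::real)" for e :: "nat \<times> nat \<Rightarrow> bool \<times> bool" and \<sigma>
  define G where "G e \<sigma> = (\<Sum>k\<in>I. if (if \<sigma> k then fst (e k) else snd (e k)) then 1 else 0::real)" for e :: "nat \<times> nat \<Rightarrow> bool \<times> bool" and \<sigma>
  define Pats where "Pats = pat n m W ` HV d C V n"
  have pc: "finite Pats \<and> real (card Pats) \<le> (\<Sum>j\<le>VC d (restrict_class d C V). real (2 * m choose j)) ^ n"
    unfolding Pats_def by (rule pattern_count[OF C]) (rule set_PW[OF valid W])
  have cF: "cnt n m h (fst \<circ> swp \<sigma> W) = F (pat n m W h) \<sigma>" for h \<sigma>
    unfolding cnt_def F_def I_def by (intro sum.cong refl) (auto simp: swp_def pat_def)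
  have cG: "cnt n m h (snd \<circ> swp \<sigma> W) = G (pat n m W h) \<sigma>" for h \<sigma>
    unfolding cnt_def G_def I_def by (intro sum.cong refl) (auto simp: swp_def pat_def)
  have "measure_pmf.prob ?\<Sigma> {\<sigma>. swp \<sigma> W \<in> {W. \<exists>h\<in>HV d C V n. cnt n m h (fst \<circ> W) \<le> t \<and> 2 * t \<le> cnt n m h (snd \<circ> W)}}
      \<le> measure_pmf.prob ?\<Sigma> (\<Union>e\<in>Pats. {\<sigma>. F e \<sigma> \<le> t \<and> 2 * t \<le> G e \<sigma>})"
    by (intro measure_pmf.finite_measure_mono) (auto simp: cF cG Pats_def)
  also have "\<dots> \<le> (\<Sum>e\<in>Pats. measure_pmf.prob ?\<Sigma> {\<sigma>. F e \<sigma> \<le> t \<and> 2 * t \<le> G e \<sigma>})"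
    using pc by (intro measure_pmf.finite_measure_subadditive_finite) auto
  also have "\<dots> \<le> (\<Sum>e\<in>Pats. exp (- t / 18))"
    unfolding F_def G_def I_def by (intro sum_mono swap_event t) auto
  also have "\<dots> = real (card Pats) * exp (- t / 18)" by simp
  also have "\<dots> \<le> (\<Sum>j\<le>VC d (restrict_class d C V). real (2 * m choose j)) ^ n * exp (- t / 18)"
    using pc by (intro mult_right_mono) auto
  finally show "measure_pmf.prob ?\<Sigma> {\<sigma>. swp \<sigma> W \<in> {W. \<exists>h\<in>HV d C V n. cnt n m h (fst \<circ> W) \<le> t \<and> 2 * t \<le> cnt n m h (snd \<circ> W)}}
      \<le> (\<Sum>j\<le>VC d (restrict_class d C V). real (2 * m choose j)) ^ n * exp (- t / 18)"
    unfolding I_def .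
qed

lemma ln_le_lin: "0 < v \<Longrightarrow> ln (v::real) \<le> v / 128 + 7 * ln 2 - 1"
proof -
  assume v: "0 < v"
  have "ln (v / 128) \<le> v / 128 - 1" using v by (intro ln_le_minus_one) auto
  moreover have "ln (v / 128) = ln v - 7 * ln 2"
  proof -
    have "ln (128::real) = ln (2 ^ 7)" by simp
    also have "\<dots> = 7 * ln 2" by (subst ln_realpow) auto
    finally show ?thesis using v by (simp add: ln_div)
  qed
  ultimately show ?thesis by simp
qed

lemma numeric:
  fixes \<epsilon> \<delta> :: real and n m k K N :: nat
  assumes e: "0 < \<epsilon>" "\<epsilon> < 1/2" and dl: "0 < \<delta>" "\<delta> < 1" and N: "1 \<le> N"
    and k: "1 \<le> k" "k \<le> K" and n: "0 < n"
    and hm: "real m \<ge> 1000 * real K * ln (1/\<epsilon>) / \<epsilon>"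
    and hnm: "real n * real m \<ge> 1000 * (ln (real N) + ln (1/\<delta>)) / \<epsilon>"
  shows "2 \<le> \<epsilon> * real n * real m" "k \<le> 2 * m"
    "2 * ((exp 1 * real (2 * m) / real k) ^ k) ^ n * exp (- (\<epsilon> * real n * real m) / 18) \<le> \<delta> / real N"
proof -
  define L where "L = ln (1/\<epsilon>)"
  have L: "2/3 \<le> L"
  proof -
    have "ln 2 \<le> L" unfolding L_def using e by (intro ln_mono) (auto simp: field_simps)
    thus ?thesis using ln2_ge_two_thirds by linarith
  qed
  define u where "u = \<epsilon> * real m"
  have u: "1000 * real K * L \<le> u" using hm e by (simp add: u_def L_def field_simps)
  have Kk: "real k \<le> real K" using k by simp
  have "real k * L \<le> real K * L" using Kk L by (intro mult_right_mono) auto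
  hence u2: "1000 * real k * L \<le> u" using u by linarith
  have kpos: "0 < real k" using k by simp
  have mpos: "0 < real m"
  proof -
    have "0 < real k * L" using kpos L by (intro mult_pos_pos) auto
    hence "0 < u" using u2 by linarith
    thus ?thesis using e by (simp add: u_def zero_less_mult_iff)
  qed
  have ln2: "ln 2 \<le> (25/36::real)" "2/3 \<le> ln (2::real)" using ln2_le_25_over_36 ln2_ge_two_thirds by auto
  define t where "t = \<epsilon> * real n * real m"
  have tu: "t = real n * u" by (simp add: t_def u_def)
  have nge: "1 \<le> real n" using n by simp
  have k1: "1 \<le> real k" using k by simp
  have "1 * L \<le> real k * L" using k1 L by (intro mult_right_mono) auto
  hence "2 \<le> u" using u2 L by linarith
  moreover have "1 * u \<le> real n * u" using nge \<open>2 \<le> u\<close> by (intro mult_right_mono) auto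
  hence "u \<le> t" using tu by simp
  ultimately have "u \<le> t" "2 \<le> u" by auto
  thus "2 \<le> \<epsilon> * real n * real m" by (simp add: t_def)
  have "real k \<le> 2 * real m"
  proof -
    have "real k * L \<le> u / 1000" using u2 by simp
    also have "\<dots> \<le> real m" using e mpos by (simp add: u_def)
    finally have "real k * (2/3) \<le> real m" using L kpos
      using mult_left_mono[of "2/3" L "real k"] by linarith
    thus ?thesis using kpos by linarith
  qed
  thus "k \<le> 2 * m" by linarith
  define v where "v = u / real k"
  have v: "1000 * L \<le> v" using u2 kpos by (simp add: v_def field_simps)
  have vpos: "0 < v" using v L by linarith
  have lnv: "ln v \<le> v / 128 + 7 * ln 2 - 1" by (rule ln_le_lin[OF vpos])
  have key: "3 + ln v + L \<le> v / 36"
    using lnv v L ln2 by linarith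
  have mk: "real (2 * m) / real k = 2 * v / \<epsilon>"
    using e kpos by (simp add: v_def u_def field_simps)
  have ln_mk: "ln (real (2 * m) / real k) = ln 2 + ln v + L"
    unfolding mk L_def using e vpos by (simp add: ln_div ln_mult)
  define A where "A = 1 + ln (real (2 * m) / real k)"
  have powA: "(exp 1 * real (2 * m) / real k) ^ k = exp (real k * A)"
  proof -
    have "exp 1 * real (2 * m) / real k = exp A"
      using kpos mpos by (simp add: A_def exp_add)
    thus ?thesis by (simp add: exp_of_nat_mult)
  qed
  have e1: "((exp 1 * real (2 * m) / real k) ^ k) ^ n = exp (real n * (real k * A))"
    unfolding powA by (rule exp_of_nat_mult[symmetric])
  have e2: "exp (ln 2 + real n * (real k * A) - t / 18) = exp (ln 2) * exp (real n * (real k * A)) * exp (- t / 18)"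
    unfolding diff_conv_add_uminus exp_add by simp
  have "2 * ((exp 1 * real (2 * m) / real k) ^ k) ^ n * exp (- t / 18) = exp (ln 2 + real n * (real k * A) - t / 18)"
    unfolding e1 e2 by simp
  also have "\<dots> \<le> exp (ln \<delta> - ln (real N))"
  proof (intro exp_le_cancel_iff[THEN iffD2])
    have t1: "ln (real N) - ln \<delta> \<le> t / 36"
    proof -
      have "ln (real N) + ln (1/\<delta>) \<le> t / 1000" using hnm e by (simp add: t_def field_simps)
      moreover have "0 \<le> ln (real N)" using N by simp
      moreover have "ln (1/\<delta>) = - ln \<delta>" using dl by (simp add: ln_div)
      moreover have "0 \<le> t" using \<open>u \<le> t\<close> \<open>2 \<le> u\<close> by linarith
      ultimately show ?thesis by linarith
    qed
    have "A = 1 + ln 2 + ln v + L" unfolding A_def ln_mk by simp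
    hence A3: "A \<le> v / 36 - ln 2" using key ln2 by linarith
    have "real k * A \<le> real k * (v / 36 - ln 2)" using A3 kpos by (intro mult_left_mono) auto
    also have "\<dots> = u / 36 - real k * ln 2" using kpos by (simp add: v_def field_simps)
    also have "\<dots> \<le> u / 36 - ln 2" using mult_right_mono[of 1 "real k" "ln 2"] k ln2 by simp
    finally have kA: "real k * A \<le> u / 36 - ln 2" .
    have "real n * (real k * A) \<le> real n * (u / 36 - ln 2)" using kA by (intro mult_left_mono) auto
    also have "\<dots> = t / 36 - real n * ln 2" by (simp add: tu field_simps)
    also have "\<dots> \<le> t / 36 - ln 2" using mult_right_mono[of 1 "real n" "ln 2"] nge ln2 by simp
    finally have "real n * (real k * A) \<le> t / 36 - ln 2" .
    thus "ln 2 + real n * (real k * A) - t / 18 \<le> ln \<delta> - ln (real N)" using t1 by linarith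
  qed
  also have "\<dots> = \<delta> / real N" using dl N by (simp add: exp_diff)
  finally show "2 * ((exp 1 * real (2 * m) / real k) ^ k) ^ n * exp (- (\<epsilon> * real n * real m) / 18) \<le> \<delta> / real N"
    by (simp add: t_def)
qed

lemma numeric0:
  fixes \<epsilon> \<delta> :: real and n m N :: nat
  assumes e: "0 < \<epsilon>" and dl: "0 < \<delta>" and N: "1 \<le> N"
    and hnm: "real n * real m \<ge> 1000 * (ln (real N) + ln (1/\<delta>)) / \<epsilon>"
  shows "exp (- (\<epsilon> * real n * real m)) \<le> \<delta> / real N"
proof -
  have "ln (real N) + ln (1/\<delta>) \<le> (\<epsilon> * real n * real m) / 1000" using hnm e by (simp add: field_simps)
  moreover have "0 \<le> ln (real N)" using N by simp
  moreover have "ln (1/\<delta>) = - ln \<delta>" using dl by (simp add: ln_div)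
  moreover have "0 \<le> \<epsilon> * real n * real m" using e by simp
  ultimately have "- (\<epsilon> * real n * real m) \<le> ln \<delta> - ln (real N)" by linarith
  hence "exp (- (\<epsilon> * real n * real m)) \<le> exp (ln \<delta> - ln (real N))" by simp
  also have "\<dots> = \<delta> / real N" using dl N by (simp add: exp_diff)
  finally show ?thesis .
qed

lemma vc0_agree:
  assumes C: "\<forall>f\<in>C. \<forall>x\<in>cube d. f x \<in> {-1, 1}"
  assumes vc: "VC d (restrict_class d C V) = 0"
  assumes f: "f \<in> restrict_class d C V" and f0: "f0 \<in> restrict_class d C V" and x: "x \<in> cube d"
  shows "f x = f0 x"
proof (rule ccontr)
  assume ne: "f x \<noteq> f0 x"
  have v: "f x \<in> {-1, 1}" "f0 x \<in> {-1, 1}" using C f f0 x by (auto simp: restrict_class_def)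
  have "shatters d (restrict_class d C V) {x}"
    unfolding shatters_def
  proof (intro conjI allI impI)
    show "{x} \<subseteq> cube d" using x by simp
    fix T assume "T \<subseteq> {x}"
    hence T: "T = {} \<or> T = {x}" by auto
    show "\<exists>h\<in>restrict_class d C V. \<forall>y\<in>{x}. (h y = 1) = (y \<in> T)"
    proof (cases "T = {}")
      case T0: True
      show ?thesis
      proof (cases "f x = 1")
        case True thus ?thesis using ne T0 f0 by (intro bexI[of _ f0]) auto
      next
        case False thus ?thesis using T0 f by (intro bexI[of _ f]) auto
      qed
    next
      case False
      hence T1: "T = {x}" using T by auto
      show ?thesis
      proof (cases "f x = 1")
        case True thus ?thesis using T1 f by (intro bexI[of _ f]) auto
      next
        case False
        hence "f0 x = 1" using v ne by auto
        thus ?thesis using T1 f0 by (intro bexI[of _ f0]) auto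
      qed
    qed
  qed
  hence "card {x} \<le> VC d (restrict_class d C V)" by (rule VC_upper)
  thus False using vc by simp
qed

lemma vc0_bound:
  assumes C: "\<forall>f\<in>C. \<forall>x\<in>cube d. f x \<in> {-1, 1}"
  assumes valid: "\<forall>i<n. set_pmf (D i) \<subseteq> cube d \<times> {-1, 1}"
  assumes vc: "VC d (restrict_class d C V) = 0"
  assumes n: "n > 0" and t: "t = \<epsilon> * real n * real m" and e: "0 < \<epsilon>"
  shows "measure_pmf.prob (sample_pmf n m D) {s. \<exists>h\<in>HV d C V n. cnt n m h s \<le> t \<and> pop_err n D h \<ge> 4 * \<epsilon>}
     \<le> exp (- t)"
proof (cases "restrict_class d C V = {}")
  case True
  hence "HV d C V n = {}" using n by (auto simp: HV_def)
  thus ?thesis by simp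
next
  case False
  then obtain f0 where f0: "f0 \<in> restrict_class d C V" by auto
  define h0 where "h0 = (\<lambda>i::nat. f0)"
  let ?S = "sample_pmf n m D"
  define bad where "bad = {s. \<exists>h\<in>HV d C V n. cnt n m h s \<le> t \<and> pop_err n D h \<ge> 4 * \<epsilon>}"
  have agree: "h i x = h0 i x" if "h \<in> HV d C V n" "i < n" "x \<in> cube d" for h i x
    using vc0_agree[OF C vc _ f0 that(3), of "h i"] that by (auto simp: HV_def h0_def)
  have sS: "s k \<in> cube d \<times> {-1, 1}" if sa: "s \<in> set_pmf ?S" and ka: "k \<in> {..<n} \<times> {..<m}" for s k
  proof -
    have "s \<in> PiE_dflt ({..<n} \<times> {..<m}) ([], 0) (set_pmf \<circ> (\<lambda>k. D (fst k)))"
      using sa unfolding sample_pmf_alt by (simp add: set_Pi_pmf)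
    moreover obtain i j where ij: "k = (i, j)" "i < n" "j < m" using ka by auto
    ultimately have "s k \<in> set_pmf (D i)" by (simp add: PiE_dflt_def)
    thus ?thesis using valid ij(2) by auto
  qed
  have cnt_eq: "cnt n m h s = cnt n m h0 s" if "h \<in> HV d C V n" "s \<in> set_pmf ?S" for h s
    unfolding cnt_def
  proof (intro sum.cong refl)
    fix k assume k: "k \<in> {..<n} \<times> {..<m}"
    have "fst (s k) \<in> cube d" using sS[OF that(2) k] by auto
    moreover have "fst k < n" using k by auto
    ultimately show "(if h (fst k) (fst (s k)) \<noteq> snd (s k) then 1 else 0::real) =
        (if h0 (fst k) (fst (s k)) \<noteq> snd (s k) then 1 else 0)"
      using agree[OF that(1)] by simp
  qed
  have pop_eq: "pop_err n D h = pop_err n D h0" if "h \<in> HV d C V n" for h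
    unfolding pop_err_def
  proof (intro arg_cong[where f="\<lambda>x. 1 / real n * x"] sum.cong refl)
    fix i assume i: "i \<in> {..<n}"
    have "{(x, y). h i x \<noteq> y} \<inter> set_pmf (D i) = {(x, y). h0 i x \<noteq> y} \<inter> set_pmf (D i)"
    proof -
      have sub: "set_pmf (D i) \<subseteq> cube d \<times> {-1, 1}" using valid i by auto
      have ag: "\<And>x. x \<in> cube d \<Longrightarrow> h i x = h0 i x" using agree[OF that, of i] i by auto
      have pt: "(h i x \<noteq> y) = (h0 i x \<noteq> y)" if "(x, y) \<in> set_pmf (D i)" for x y
        using subsetD[OF sub that] ag by auto
      show ?thesis using pt by auto
    qed
    thus "measure_pmf.prob (D i) {(x, y). h i x \<noteq> y} = measure_pmf.prob (D i) {(x, y). h0 i x \<noteq> y}"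
      by (metis measure_Int_set_pmf)
  qed
  show ?thesis
  proof (cases "pop_err n D h0 \<ge> 4 * \<epsilon>")
    case False
    have "bad \<inter> set_pmf ?S = {}" using False pop_eq by (auto simp: bad_def)
    hence "measure_pmf.prob ?S bad = 0" by (metis measure_Int_set_pmf measure_empty)
    thus ?thesis unfolding bad_def by simp
  next
    case True
    have "measure_pmf.prob ?S bad = measure_pmf.prob ?S (bad \<inter> set_pmf ?S)" by (simp add: measure_Int_set_pmf)
    also have "\<dots> \<le> measure_pmf.prob ?S {s. cnt n m h0 s \<le> t}"
      by (intro measure_pmf.finite_measure_mono) (auto simp: bad_def cnt_eq)
    also have "\<dots> \<le> 2 powr t * exp (-(\<Sum>k\<in>{..<n} \<times> {..<m}. measure_pmf.prob (D (fst k)) {b. h0 (fst k) (fst b) \<noteq> snd b})/2)"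
      unfolding sample_pmf_alt cnt_def
      using chernoff_lower[where I="{..<n} \<times> {..<m}" and dflt="([], 0)" and Q="\<lambda>k. D (fst k)"
          and g="\<lambda>k b. h0 (fst k) (fst b) \<noteq> snd b" and a="t"] by simp
    also have "\<dots> \<le> exp (25/36 * t) * exp (- (2 * t))"
    proof (intro mult_mono two_powr_le)
      have "real m * real n * (4 * \<epsilon>) \<le> real m * real n * pop_err n D h0"
        using True by (intro mult_left_mono) auto
      hence "4 * t \<le> real m * real n * pop_err n D h0"
        using t by (simp add: mult.commute mult.left_commute)
      thus "exp (-(\<Sum>k\<in>{..<n} \<times> {..<m}. measure_pmf.prob (D (fst k)) {b. h0 (fst k) (fst b) \<noteq> snd b})/2) \<le> exp (- (2 * t))"
        using mu_eq[OF n, of D h0 m] by simp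
    qed (use t e in auto)
    also have "\<dots> = exp (- (11/36 * t) - t)" by (simp add: exp_add[symmetric])
    also have "\<dots> \<le> exp (- t)" using t e by simp
    finally show ?thesis unfolding bad_def .
  qed
qed

theorem mainTheorem5:
  "\<exists>c::real. c > 0 \<and>
    (\<forall>(d::nat) (C :: (int list \<Rightarrow> int) set) (\<V> :: nat set set) (\<epsilon>::real) (\<delta>::real) (n::nat) (m::nat).
       (\<forall>f\<in>C. \<forall>x\<in>cube d. f x \<in> {-1, 1}) \<longrightarrow>
       \<V> \<noteq> {} \<longrightarrow> \<V> \<subseteq> Pow {..<d} \<longrightarrow>
       0 < \<epsilon> \<longrightarrow> \<epsilon> < 1/2 \<longrightarrow> 0 < \<delta> \<longrightarrow> \<delta> < 1 \<longrightarrow>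
       real m \<ge> c * real (VC_coll d C \<V>) * ln (1/\<epsilon>) / \<epsilon> \<longrightarrow>
       real n * real m \<ge> c * (ln (real (card \<V>)) + ln (1/\<delta>)) / \<epsilon> \<longrightarrow>
       delta_gen d C \<V> n m \<epsilon> \<le> \<delta>)"
proof (intro exI[of _ "1000::real"] conjI allI impI)
  show "(0::real) < 1000" by simp
  fix d :: nat and C :: "(int list \<Rightarrow> int) set" and \<V> :: "nat set set" and \<epsilon> \<delta> :: real and n m :: nat
  assume C: "\<forall>f\<in>C. \<forall>x\<in>cube d. f x \<in> {-1, 1}" and V0: "\<V> \<noteq> {}" and Vsub: "\<V> \<subseteq> Pow {..<d}"
    and e0: "0 < \<epsilon>" and e1: "\<epsilon> < 1/2" and d0: "0 < \<delta>" and d1: "\<delta> < 1"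
    and hm: "real m \<ge> 1000 * real (VC_coll d C \<V>) * ln (1/\<epsilon>) / \<epsilon>"
    and hnm: "real n * real m \<ge> 1000 * (ln (real (card \<V>)) + ln (1/\<delta>)) / \<epsilon>"
  define N where "N = card \<V>"
  have finV: "finite \<V>" using Vsub by (rule finite_subset) auto
  have N1: "1 \<le> N" using finV V0 by (simp add: N_def Suc_le_eq card_gt_0_iff)
  define K where "K = VC_coll d C \<V>"
  have kle: "VC d (restrict_class d C V) \<le> K" if "V \<in> \<V>" for V
    unfolding K_def VC_coll_def using finV that by (intro Max_ge) auto
  have lnd: "0 < ln (1/\<delta>)" using d0 d1 by simp
  have lnN: "0 \<le> ln (real N)" using N1 by simp
  have "0 < 1000 * (ln (real N) + ln (1/\<delta>)) / \<epsilon>" using lnd lnN e0 by simp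
  hence "0 < real n * real m" using hnm by (simp add: N_def)
  hence n: "0 < n" and m: "0 < m" by (auto simp: zero_less_mult_iff)
  define t where "t = \<epsilon> * real n * real m"
  show "delta_gen d C \<V> n m \<epsilon> \<le> \<delta>"
    unfolding delta_gen_def
  proof (rule cSUP_least)
    have "(\<lambda>_. return_pmf (replicate d 1, 1)) \<in> valid_dists d n"
      by (auto simp: valid_dists_def cube_def)
    thus "valid_dists d n \<noteq> {}" by blast
  next
    fix D assume "D \<in> valid_dists d n"
    hence valid: "\<forall>i<n. set_pmf (D i) \<subseteq> cube d \<times> {-1, 1}" by (simp add: valid_dists_def)
    let ?S = "sample_pmf n m D"
    define badV where "badV V = {s. \<exists>h\<in>HV d C V n. cnt n m h s \<le> t \<and> pop_err n D h \<ge> 4 * \<epsilon>}" for V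
    have sub: "bad_event d C \<V> n m \<epsilon> D \<subseteq> (\<Union>V\<in>\<V>. badV V)"
    proof
      fix s assume "s \<in> bad_event d C \<V> n m \<epsilon> D"
      then obtain h where h: "\<forall>i<n. h i \<in> C" "(\<Union>i<n. Rel d (h i)) \<in> \<V>" "emp_err n m h s \<le> \<epsilon>" "pop_err n D h \<ge> 4 * \<epsilon>"
        unfolding bad_event_def by blast
      have "cnt n m h s / (real n * real m) \<le> \<epsilon>" using h(3) by (simp add: emp_err_cnt)
      hence "cnt n m h s \<le> t" using n m by (simp add: t_def pos_divide_le_eq mult.commute mult.left_commute)
      moreover have "h \<in> HV d C (\<Union>i<n. Rel d (h i)) n"
        using h(1) by (auto simp: HV_def restrict_class_def)
      ultimately show "s \<in> (\<Union>V\<in>\<V>. badV V)" using h(2,4) by (auto simp: badV_def)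
    qed
    have each: "measure_pmf.prob ?S (badV V) \<le> \<delta> / real N" if V: "V \<in> \<V>" for V
    proof (cases "VC d (restrict_class d C V) = 0")
      case True
      have "measure_pmf.prob ?S (badV V) \<le> exp (- t)"
        unfolding badV_def by (rule vc0_bound[OF C valid True n t_def e0])
      also have "\<dots> \<le> \<delta> / real N"
        unfolding t_def by (rule numeric0[OF e0 d0 N1]) (use hnm in \<open>simp add: N_def\<close>)
      finally show ?thesis .
    next
      case False
      define k where "k = VC d (restrict_class d C V)"
      have k1: "1 \<le> k" using False by (simp add: k_def)
      have kK: "k \<le> K" using kle[OF V] by (simp add: k_def)
      have hm': "real m \<ge> 1000 * real K * ln (1/\<epsilon>) / \<epsilon>" using hm by (simp add: K_def)
      have hnm': "real n * real m \<ge> 1000 * (ln (real N) + ln (1/\<delta>)) / \<epsilon>" using hnm by (simp add: N_def)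
      note num = numeric[OF e0 e1 d0 d1 N1 k1 kK n hm' hnm']
      have "measure_pmf.prob ?S (badV V)
          \<le> 2 * measure_pmf.prob (PW n m D) {W. \<exists>h\<in>HV d C V n. cnt n m h (fst \<circ> W) \<le> t \<and> 2 * t \<le> cnt n m h (snd \<circ> W)}"
        unfolding badV_def by (rule ghost[OF n m t_def]) (use num(1) in \<open>simp add: t_def\<close>)
      also have "\<dots> \<le> 2 * ((\<Sum>j\<le>k. real (2 * m choose j)) ^ n * exp (- t / 18))"
        unfolding k_def using e0 by (intro mult_left_mono swap_bound[OF C valid]) (auto simp: t_def)
      also have "\<dots> \<le> 2 * (((exp 1 * real (2 * m) / real k) ^ k) ^ n * exp (- t / 18))"
        by (intro mult_left_mono mult_right_mono power_mono sauer_bound k1 num(2)) (auto intro: sum_nonneg)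
      also have "\<dots> \<le> \<delta> / real N" using num(3) by (simp add: t_def mult.assoc)
      finally show ?thesis .
    qed
    have "delta_gen_D d C \<V> n m \<epsilon> D \<le> measure_pmf.prob ?S (\<Union>V\<in>\<V>. badV V)"
      unfolding delta_gen_D_def by (intro measure_pmf.finite_measure_mono sub) auto
    also have "\<dots> \<le> (\<Sum>V\<in>\<V>. measure_pmf.prob ?S (badV V))"
      using finV by (intro measure_pmf.finite_measure_subadditive_finite) auto
    also have "\<dots> \<le> (\<Sum>V\<in>\<V>. \<delta> / real N)" by (intro sum_mono each)
    also have "\<dots> = \<delta>" using N1 by (simp add: N_def)
    finally show "delta_gen_D d C \<V> n m \<epsilon> D \<le> \<delta>" .
  qed
qed

end
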